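(* Let $q>2$ be a prime power, $G=\mathrm{GL}_2(\mathbb F_q)$, and $P=\left\{\begin{pmatrix}1&y\\0&w\end{pmatrix}\;\middle|\; y\in\mathbb F_q,\ w\in\mathbb F_q^\times\right\}\le G$. Then \[\mathrm{Ind}_P^{G}(\mathbb 1_P)\cong \mathbb 1_{G}\oplus\rho_{\mathbb 1_q}\oplus\bigoplus_{\chi\in\widehat{\mathbb F_q^\times}\setminus\{\mathbb 1_q\}}\rho_{\chi,\mathbb 1_q}.\]
   Context: All representations are complex. $\mathbb 1_H$ denotes the trivial representation of a group $H$, and $\mathbb 1_q$ the trivial character of $\mathbb F_q^\times$; $\widehat{\mathbb F_q^\times}$ is the set of one-dimensional characters of $\mathbb F_q^\times$. Let $B\le G$ be the subgroup of upper triangular invertible matrices. For $\mu_1,\mu_2\in\widehat{\mathbb F_q^\times}$, let $\mu_{1,2}:B\to\mathbb C^\times$, $\mu_{1,2}\begin{pmatrix}u&w\\0&v\end{pmatrix}=\mu_1(u)\mu_2(v)$, and $\rho_{\mu_1,\mu_2}=\mathrm{Ind}_B^G(\mu_{1,2})$ (irreducible of dimension $q+1$ when $\mu_1\ne\mu_2$). For $\mu\in\widehat{\mathbb F_q^\times}$, $\det_\mu(X)=\mu(\det X)$ is a one-dimensional constituent of $\rho_{\mu,\mu}$, and $\rho_\mu$ denotes its complement in $\rho_{\mu,\mu}$ (an irreducible representation of dimension $q$); in particular $\rho_{\mathbb 1_q}$ is the $q$-dimensional irreducible constituent of $\mathrm{Ind}_B^G(\mathbb 1_B)$ other than the trivial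 one. *)

theory Defs
  imports "HOL-Analysis.Determinants"
begin

text \<open>A complex representation is modelled concretely: a space of complex-valued
  functions on some index type 'x (a C-subspace of 'x => complex) together with
  an action of group elements on it.\<close>
type_synonym ('g, 'x) crep = "('x \<Rightarrow> complex) set \<times> ('g \<Rightarrow> ('x \<Rightarrow> complex) \<Rightarrow> ('x \<Rightarrow> complex))"

text \<open>Isomorphism of representations of the group with carrier G: a C-linear
  bijection between the spaces intertwining the actions.\<close>
definition rep_iso :: "'g set \<Rightarrow> ('g, 'x) crep \<Rightarrow> ('g, 'y) crep \<Rightarrow> bool" where
  "rep_iso G R S \<longleftrightarrow> (\<exists>T.
      (\<forall>u\<in>fst R. \<forall>v\<in>fst R. \<forall>a b. T (\<lambda>x. a * u x + b * v x) = (\<lambda>y. a * T u y + b * T v y))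
    \<and> bij_betw T (fst R) (fst S)
    \<and> (\<forall>g\<in>G. \<forall>v\<in>fst R. T (snd R g v) = snd S g (T v)))"

text \<open>Trivial one-dimensional representation.\<close>
definition triv_rep :: "('g, unit) crep" where
  "triv_rep = (UNIV, (\<lambda>g f. f))"

text \<open>Binary direct sum.\<close>
definition dsum2 :: "('g, 'x) crep \<Rightarrow> ('g, 'y) crep \<Rightarrow> ('g, 'x + 'y) crep" where
  "dsum2 R S =
     ({h. (\<lambda>x. h (Inl x)) \<in> fst R \<and> (\<lambda>y. h (Inr y)) \<in> fst S},
      (\<lambda>g h z. case z of Inl x \<Rightarrow> snd R g (\<lambda>x. h (Inl x)) x
                       | Inr y \<Rightarrow> snd S g (\<lambda>y. h (Inr y)) y))"

text \<open>Direct sum of a family indexed by the (finite) set I.\<close>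
definition dsum_fam :: "'i set \<Rightarrow> ('i \<Rightarrow> ('g, 'x) crep) \<Rightarrow> ('g, 'i \<times> 'x) crep" where
  "dsum_fam I R =
     ({h. (\<forall>i\<in>I. (\<lambda>x. h (i, x)) \<in> fst (R i)) \<and> (\<forall>i x. i \<notin> I \<longrightarrow> h (i, x) = 0)},
      (\<lambda>g h ix. if fst ix \<in> I then snd (R (fst ix)) g (\<lambda>x. h (fst ix, x)) (snd ix) else 0))"

text \<open>Induced representation Ind_H^G(psi) of a one-dimensional character psi of H,
  in the standard model: functions f on G with f(h g) = psi(h) f(g), G acting by
  right translation.\<close>
definition ind_rep :: "'g set \<Rightarrow> ('g \<Rightarrow> 'g \<Rightarrow> 'g) \<Rightarrow> 'g set \<Rightarrow> ('g \<Rightarrow> complex) \<Rightarrow> ('g, 'g) crep" where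
  "ind_rep G m H psi =
     ({f. (\<forall>g. g \<notin> G \<longrightarrow> f g = 0) \<and> (\<forall>h\<in>H. \<forall>g\<in>G. f (m h g) = psi h * f g)},
      (\<lambda>x f g. f (m g x)))"

text \<open>GL_2 over a field and its subgroups. A \$ i \$ j is the (i,j) entry.\<close>
definition GL2 :: "('k::field ^ 2 ^ 2) set" where
  "GL2 = {A. det A \<noteq> 0}"

definition Borel :: "('k::field ^ 2 ^ 2) set" where
  "Borel = {A \<in> GL2. A $ 2 $ 1 = 0}"

definition Mirabolic :: "('k::field ^ 2 ^ 2) set" where
  "Mirabolic = {A \<in> GL2. A $ 1 $ 1 = 1 \<and> A $ 2 $ 1 = 0}"

text \<open>One-dimensional characters of F_q^x, extended by 0 at 0 (so they are
  determined by their values on F_q^x).\<close>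
definition fq_chars :: "('k::field \<Rightarrow> complex) set" where
  "fq_chars = {c. c 0 = 0 \<and> (\<forall>x. x \<noteq> 0 \<longrightarrow> c x \<noteq> 0)
                 \<and> (\<forall>x y. x \<noteq> 0 \<longrightarrow> y \<noteq> 0 \<longrightarrow> c (x * y) = c x * c y)}"

definition triv_char :: "'k::field \<Rightarrow> complex" where
  "triv_char x = (if x = 0 then 0 else 1)"

definition mu12 :: "('k::field \<Rightarrow> complex) \<Rightarrow> ('k \<Rightarrow> complex) \<Rightarrow> 'k ^ 2 ^ 2 \<Rightarrow> complex" where
  "mu12 \<mu>1 \<mu>2 A = \<mu>1 (A $ 1 $ 1) * \<mu>2 (A $ 2 $ 2)"

text \<open>rho_{mu1,mu2} = Ind_B^G(mu_{1,2}).\<close>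
definition rho_pair :: "('k::field \<Rightarrow> complex) \<Rightarrow> ('k \<Rightarrow> complex) \<Rightarrow> ('k ^ 2 ^ 2, 'k ^ 2 ^ 2) crep" where
  "rho_pair \<mu>1 \<mu>2 = ind_rep GL2 (**) Borel (mu12 \<mu>1 \<mu>2)"

text \<open>rho_mu: the complement of the line spanned by det_mu inside rho_{mu,mu},
  realised as the orthogonal complement w.r.t. the G-invariant inner product
  sum over g of f(g) * conj(h(g)).\<close>
definition rho_single :: "('k::{field,finite} \<Rightarrow> complex) \<Rightarrow> ('k ^ 2 ^ 2, 'k ^ 2 ^ 2) crep" where
  "rho_single \<mu> =
     ({f \<in> fst (rho_pair \<mu> \<mu>). (\<Sum>g\<in>GL2. f g * cnj (\<mu> (det g))) = 0}, snd (rho_pair \<mu> \<mu>))"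

end

theory Submission
  imports Defs "HOL-Algebra.Multiplicative_Group" "HOL-Analysis.Complex_Transcendental"
begin

lemma fin_field_cyclic:
  "\<exists>\<gamma>::'k::{field,finite}. \<exists>m>0. \<gamma> \<noteq> 0 \<and> (\<forall>x. x \<noteq> 0 \<longrightarrow> (\<exists>i. x = \<gamma>^i)) \<and> (\<forall>j. \<gamma>^j = 1 \<longleftrightarrow> m dvd j)"
proof -
  define R :: "'k ring" where "R = \<lparr>carrier = UNIV, mult = (*), one = 1, zero = 0, add = (+)\<rparr>"
  have cr: "cring R"
  proof (rule cringI)
    show "abelian_group R" unfolding R_def
      by (rule abelian_groupI) (auto intro: left_minus)
    show "Group.comm_monoid R" unfolding R_def
      by (simp add: Group.monoid.intro monoid.monoid_comm_monoidI)
  qed (auto simp: R_def distrib_right)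
  have fr: "field R"
  proof (rule cring.field_intro2[OF cr])
    show "\<zero>\<^bsub>R\<^esub> \<noteq> \<one>\<^bsub>R\<^esub>" by (simp add: R_def)
    fix x assume "x \<in> carrier R - {\<zero>\<^bsub>R\<^esub>}"
    then have "x \<noteq> 0" by (simp add: R_def)
    then show "x \<in> Units R" unfolding Units_def R_def
      by (auto intro!: exI[of _ "inverse x"])
  qed
  have pw: "x [^]\<^bsub>R\<^esub> (n::nat) = x ^ n" for x :: 'k and n
  proof (induction n)
    case 0 then show ?case by (simp add: R_def)
  next
    case (Suc n)
    have "x [^]\<^bsub>R\<^esub> Suc n = x [^]\<^bsub>R\<^esub> n \<otimes>\<^bsub>R\<^esub> x"
      using monoid.nat_pow_Suc[OF cring.axioms(1)[OF cr, THEN ring.is_monoid]] by simp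
    then show ?case using Suc by (simp add: R_def mult.commute)
  qed
  obtain g where g: "g \<in> carrier (mult_of R)" "carrier (mult_of R) = {g[^]\<^bsub>R\<^esub>i | i::nat . i \<in> UNIV}"
    using field.finite_field_mult_group_has_gen[OF fr] by (auto simp: R_def)
  interpret G: group "mult_of R" by (rule field.field_mult_group[OF fr])
  have fin: "finite (carrier (mult_of R))" by (simp add: R_def)
  define m where "m = G.ord g"
  have m0: "m > 0" using G.ord_ge_1[OF fin g(1)] by (simp add: m_def)
  have "\<forall>j. g^j = 1 \<longleftrightarrow> m dvd j"
  proof
    fix j
    have "g [^]\<^bsub>R\<^esub> j = \<one>\<^bsub>R\<^esub> \<longleftrightarrow> m dvd j"
      using G.pow_eq_id[OF g(1)] by (simp add: m_def nat_pow_mult_of)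
    then show "g^j = 1 \<longleftrightarrow> m dvd j" by (simp add: pw, simp add: R_def)
  qed
  moreover have "g \<noteq> 0" using g(1) by (simp add: R_def)
  moreover have "\<forall>x. x \<noteq> 0 \<longrightarrow> (\<exists>i. x = g^i)"
    using g(2) by (auto simp: R_def pw[symmetric] set_eq_iff)
  ultimately show ?thesis using m0 by blast
qed

lemma char_mult: "c \<in> fq_chars \<Longrightarrow> (x::'k::field) \<noteq> 0 \<Longrightarrow> y \<noteq> 0 \<Longrightarrow> c (x * y) = c x * c y"
  unfolding fq_chars_def by blast

lemma char_zero: "c \<in> fq_chars \<Longrightarrow> c 0 = 0"
  unfolding fq_chars_def by blast

lemma char_nz: "c \<in> fq_chars \<Longrightarrow> (x::'k::field) \<noteq> 0 \<Longrightarrow> c x \<noteq> 0"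
  unfolding fq_chars_def by blast

lemma char_one: "c \<in> fq_chars \<Longrightarrow> c 1 = 1"
proof -
  assume c: "c \<in> fq_chars"
  have "c 1 = c 1 * c 1" using char_mult[OF c, of 1 1] by simp
  then show "c 1 = 1" using char_nz[OF c, of 1] by (metis mult_cancel_left1 one_neq_zero)
qed

lemma char_inv: "c \<in> fq_chars \<Longrightarrow> (x::'k::field) \<noteq> 0 \<Longrightarrow> c (inverse x) * c x = 1"
proof -
  assume c: "c \<in> fq_chars" and x: "x \<noteq> 0"
  have "c (inverse x * x) = c (inverse x) * c x" using char_mult[OF c, of "inverse x" x] x by simp
  then show ?thesis using x char_one[OF c] by simp
qed

lemma char_pow: "c \<in> fq_chars \<Longrightarrow> (x::'k::field) \<noteq> 0 \<Longrightarrow> c (x ^ n) = c x ^ n"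
  by (induction n) (auto simp: char_one char_mult)

lemma triv_in: "triv_char \<in> fq_chars"
  unfolding fq_chars_def triv_char_def by auto

lemma chars_facts:
  "finite (fq_chars :: ('k::{field,finite} \<Rightarrow> complex) set) \<and>
   (\<forall>t::'k. t \<noteq> 0 \<longrightarrow> t \<noteq> 1 \<longrightarrow> (\<exists>\<psi>\<in>fq_chars. \<psi> t \<noteq> 1))"
proof -
  obtain \<gamma> :: 'k and m where m0: "m > 0" and g0: "\<gamma> \<noteq> 0"
    and gen': "\<forall>x. x \<noteq> 0 \<longrightarrow> (\<exists>i. x = \<gamma>^i)" and ord': "\<forall>j. \<gamma>^j = 1 \<longleftrightarrow> m dvd j"
    using fin_field_cyclic[where 'k='k] by (elim exE conjE)
  have gen: "\<exists>i. x = \<gamma>^i" if "x \<noteq> 0" for x using gen' that by blast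
  have ord: "\<gamma>^j = 1 \<longleftrightarrow> m dvd j" for j using ord' by blast
  define \<omega> :: complex where "\<omega> = exp (2 * pi * \<i> / m)"
  have "\<omega> ^ m = exp (of_nat m * (2 * pi * \<i> / m))" unfolding \<omega>_def by (simp only: exp_of_nat_mult)
  also have "\<dots> = exp (2 * pi * \<i>)" using m0 by simp
  finally have wm: "\<omega> ^ m = 1" by simp
  have wne: "\<omega> ^ a \<noteq> 1" if "\<not> m dvd a" for a
  proof
    assume "\<omega> ^ a = 1"
    moreover have "exp (of_nat a * (2 * pi * \<i> / m)) = \<omega> ^ a" unfolding \<omega>_def by (simp only: exp_of_nat_mult)
    ultimately have "exp (of_nat a * (2 * pi * \<i> / m)) = 1" by simp
    then obtain n :: int where n: "Im (of_nat a * (2 * pi * \<i> / m)) = of_int (2 * n) * pi"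
      unfolding exp_eq_1 by blast
    have "Im (of_nat a * (2 * pi * \<i> / m)) = real a * (2 * pi) / real m" by simp
    with n have "real a * (2 * pi) / real m = 2 * real_of_int n * pi" by simp
    then have "real a * (2 * pi) = (2 * real_of_int n * pi) * real m" using m0
      by (simp add: divide_eq_eq)
    then have "real a = real m * n" using pi_gt_zero by (simp add: algebra_simps)
    then have "real_of_int (int a) = real_of_int (int m * n)" by simp
    then have "int a = int m * n" by (simp only: of_int_eq_iff)
    then have "int m dvd int a" by simp
    then show False using that by simp
  qed
  have weq: "\<omega> ^ a = \<omega> ^ b" if "\<gamma> ^ a = \<gamma> ^ b" for a b
  proof -
    have *: "\<omega> ^ a = \<omega> ^ b" if "\<gamma> ^ a = \<gamma> ^ b" "a \<le> b" for a b
    proof -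
      have "\<gamma> ^ b = \<gamma> ^ a * \<gamma> ^ (b - a)" using that(2) by (simp flip: power_add)
      then have "\<gamma> ^ (b - a) = 1" using that(1) g0 by simp
      then obtain k where k: "b - a = m * k" using ord by blast
      have "b = a + m * k" using that(2) k by simp
      then have "\<omega> ^ b = \<omega> ^ a * (\<omega> ^ m) ^ k" by (simp add: power_add power_mult)
      then show ?thesis using wm by simp
    qed
    show ?thesis
    proof (cases "a \<le> b")
      case True then show ?thesis using *[OF that] by simp
    next
      case False
      then have "b \<le> a" by simp
      from *[OF that[symmetric] this] show ?thesis by simp
    qed
  qed
  define e where "e x = (SOME i. x = \<gamma> ^ i)" for x :: 'k
  define \<psi> :: "'k \<Rightarrow> complex" where "\<psi> x = (if x = 0 then 0 else \<omega> ^ e x)" for x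
  have psi_pow: "\<psi> (\<gamma> ^ a) = \<omega> ^ a" for a
  proof -
    have "\<gamma> ^ a = \<gamma> ^ e (\<gamma> ^ a)" unfolding e_def by (rule someI_ex) blast
    then have w: "\<omega> ^ a = \<omega> ^ e (\<gamma> ^ a)" by (rule weq)
    have "\<gamma> ^ a \<noteq> 0" using g0 by (rule power_not_zero)
    then have "\<psi> (\<gamma> ^ a) = \<omega> ^ e (\<gamma> ^ a)" unfolding \<psi>_def by (rule if_not_P)
    then show ?thesis using w by (rule trans[OF _ sym])
  qed
  have w0: "\<omega> \<noteq> 0" unfolding \<omega>_def by simp
  have psi_in: "\<psi> \<in> fq_chars"
    unfolding fq_chars_def
  proof (intro CollectI conjI allI impI)
    show "\<psi> 0 = 0" by (simp add: \<psi>_def)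
    fix x y :: 'k assume "x \<noteq> 0"
    then show "\<psi> x \<noteq> 0" using w0 by (simp add: \<psi>_def)
    assume "y \<noteq> 0"
    obtain i where i: "x = \<gamma>^i" using gen[OF \<open>x \<noteq> 0\<close>] by (elim exE)
    obtain j where j: "y = \<gamma>^j" using gen[OF \<open>y \<noteq> 0\<close>] by (elim exE)
    have "\<psi> (x * y) = \<psi> (\<gamma> ^ (i + j))" by (simp only: i j power_add)
    also have "\<dots> = \<omega> ^ (i + j)" by (rule psi_pow)
    also have "\<dots> = \<psi> x * \<psi> y" by (simp only: i j psi_pow power_add)
    finally show "\<psi> (x * y) = \<psi> x * \<psi> y" .
  qed
  have sep: "\<exists>\<psi>\<in>fq_chars. \<psi> t \<noteq> 1" if t0: "t \<noteq> 0" and t1: "t \<noteq> 1" for t :: 'k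
  proof -
    obtain i where i: "t = \<gamma>^i" using gen[OF t0] by (elim exE)
    have "\<not> m dvd i"
    proof
      assume "m dvd i"
      then have "\<gamma>^i = 1" using ord[of i] by simp
      then show False using i t1 by simp
    qed
    then have "\<omega> ^ i \<noteq> 1" by (rule wne)
    then have "\<psi> t \<noteq> 1" using i psi_pow[of i] by simp
    then show ?thesis using psi_in by blast
  qed
  have fin: "finite (fq_chars :: ('k \<Rightarrow> complex) set)"
  proof -
    define S where "S = insert 0 {z::complex. z ^ m = 1}"
    have fS: "finite S" unfolding S_def using m0 by (simp add: finite_roots_unity)
    have "fq_chars \<subseteq> PiE (UNIV::'k set) (\<lambda>_. S)"
    proof
      fix c :: "'k \<Rightarrow> complex" assume c: "c \<in> fq_chars"
      have "c x \<in> S" for x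
      proof (cases "x = 0")
        case True then show ?thesis using char_zero[OF c] by (simp add: S_def)
      next
        case False
        then obtain i where "x = \<gamma>^i" using gen by blast
        have gm: "\<gamma> ^ m = 1" using ord by simp
        have "x ^ m = \<gamma> ^ (i * m)" using \<open>x = \<gamma>^i\<close> by (simp add: power_mult)
        also have "\<dots> = (\<gamma> ^ m) ^ i" by (simp add: power_mult[symmetric] mult.commute)
        finally have "x ^ m = 1" using gm by simp
        then have "c x ^ m = 1" using char_pow[OF c False, of m] char_one[OF c] by simp
        then show ?thesis by (simp add: S_def)
      qed
      then show "c \<in> PiE UNIV (\<lambda>_. S)" by (simp add: PiE_iff)
    qed
    moreover have "finite (PiE (UNIV::'k set) (\<lambda>_. S))" by (rule finite_PiE) (simp_all add: fS)
    ultimately show ?thesis by (rule finite_subset)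
  qed
  show ?thesis using fin sep by blast
qed

lemma finite_chars: "finite (fq_chars :: ('k::{field,finite} \<Rightarrow> complex) set)"
  using chars_facts by (rule conjunct1)

lemma sep_char: "(t::'k::{field,finite}) \<noteq> 0 \<Longrightarrow> t \<noteq> 1 \<Longrightarrow> \<exists>\<psi>\<in>fq_chars. \<psi> t \<noteq> 1"
  using chars_facts[THEN conjunct2, rule_format] .

lemma char_sum_zero:
  assumes "(t::'k::{field,finite}) \<noteq> 0" "t \<noteq> 1"
  shows "(\<Sum>c\<in>fq_chars. c t) = 0"
proof -
  obtain \<psi> where psi: "\<psi> \<in> fq_chars" "\<psi> t \<noteq> 1" using sep_char assms by blast
  define F where "F c = (\<lambda>x. \<psi> x * c x)" for c :: "'k \<Rightarrow> complex"
  define H where "H c = (\<lambda>x. \<psi> (inverse x) * c x)" for c :: "'k \<Rightarrow> complex"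
  have Fin: "F c \<in> fq_chars" if c: "c \<in> fq_chars" for c
    unfolding fq_chars_def F_def
  proof (intro CollectI conjI allI impI)
    show "\<psi> 0 * c 0 = 0" using char_zero[OF c] by simp
    fix x y :: 'k assume x: "x \<noteq> 0"
    then show "\<psi> x * c x \<noteq> 0" using char_nz[OF c] char_nz[OF psi(1)] by simp
    assume y: "y \<noteq> 0"
    show "\<psi> (x * y) * c (x * y) = \<psi> x * c x * (\<psi> y * c y)"
      using x y by (simp add: char_mult[OF c] char_mult[OF psi(1)] algebra_simps)
  qed
  have Hin: "H c \<in> fq_chars" if c: "c \<in> fq_chars" for c
    unfolding fq_chars_def H_def
  proof (intro CollectI conjI allI impI)
    show "\<psi> (inverse 0) * c 0 = 0" using char_zero[OF c] by simp
    fix x y :: 'k assume x: "x \<noteq> 0"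
    then show "\<psi> (inverse x) * c x \<noteq> 0" using char_nz[OF c] char_nz[OF psi(1)] by simp
    assume y: "y \<noteq> 0"
    have "\<psi> (inverse (x * y)) = \<psi> (inverse x) * \<psi> (inverse y)"
      using x y by (simp add: inverse_mult_distrib char_mult[OF psi(1)])
    then show "\<psi> (inverse (x * y)) * c (x * y) = \<psi> (inverse x) * c x * (\<psi> (inverse y) * c y)"
      using x y by (simp add: char_mult[OF c] algebra_simps)
  qed
  have FH: "F (H c) = c" if "c \<in> fq_chars" for c
  proof
    fix x show "F (H c) x = c x"
    proof (cases "x = 0")
      case True then show ?thesis using char_zero[OF that] by (simp add: F_def H_def)
    next
      case False
      have "F (H c) x = (\<psi> (inverse x) * \<psi> x) * c x" by (simp add: F_def H_def)
      then show ?thesis using char_inv[OF psi(1) False] by simp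
    qed
  qed
  have HF: "H (F c) = c" if "c \<in> fq_chars" for c
  proof
    fix x show "H (F c) x = c x"
    proof (cases "x = 0")
      case True then show ?thesis using char_zero[OF that] by (simp add: F_def H_def)
    next
      case False
      have "H (F c) x = (\<psi> (inverse x) * \<psi> x) * c x" by (simp add: F_def H_def)
      then show ?thesis using char_inv[OF psi(1) False] by simp
    qed
  qed
  have "(\<Sum>c\<in>fq_chars. c t) = (\<Sum>c\<in>fq_chars. F c t)"
    by (rule sum.reindex_bij_witness[of _ F H]) (simp_all add: FH HF Fin Hin)
  also have "\<dots> = \<psi> t * (\<Sum>c\<in>fq_chars. c t)" by (simp add: F_def sum_distrib_left)
  finally have "(\<psi> t - 1) * (\<Sum>c\<in>fq_chars. c t) = 0" by (simp add: algebra_simps)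
  then show ?thesis using psi(2) by simp
qed

lemma char_orth:
  assumes c: "c \<in> fq_chars" and d: "d \<in> fq_chars"
  shows "(\<Sum>t\<in>{t::'k::{field,finite}. t \<noteq> 0}. c (inverse t) * d t) = (if c = d then of_nat (card {t::'k. t \<noteq> 0}) else 0)"
proof (cases "c = d")
  case True
  then show ?thesis using char_inv[OF c] by simp
next
  case False
  then obtain s where s: "c s \<noteq> d s"  by blast
  then have s0: "s \<noteq> 0" using char_zero[OF c] char_zero[OF d] by auto
  let ?U = "{t::'k. t \<noteq> 0}"
  have "(\<Sum>t\<in>?U. c (inverse t) * d t) = (\<Sum>u\<in>?U. c (inverse (s * u)) * d (s * u))"
    by (rule sum.reindex_bij_witness[of _ "\<lambda>u. s * u" "\<lambda>t. t / s"]) (use s0 in auto)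
  also have "\<dots> = (c (inverse s) * d s) * (\<Sum>t\<in>?U. c (inverse t) * d t)"
    unfolding sum_distrib_left
    by (rule sum.cong) (use s0 c d in \<open>auto simp: char_mult inverse_mult_distrib\<close>)
  finally have eq: "(\<Sum>t\<in>?U. c (inverse t) * d t) = (c (inverse s) * d s) * (\<Sum>t\<in>?U. c (inverse t) * d t)" .
  have "c (inverse s) * d s \<noteq> 1"
  proof
    assume "c (inverse s) * d s = 1"
    moreover have "c (inverse s) * c s = 1" using char_inv[OF c s0] .
    moreover have "c (inverse s) \<noteq> 0" using char_nz[OF c] s0 by simp
    ultimately have "c (inverse s) * d s = c (inverse s) * c s" by simp
    then have "d s = c s" using \<open>c (inverse s) \<noteq> 0\<close> by simp
    then show False using s by simp
  qed
  moreover from eq have "(c (inverse s) * d s - 1) * (\<Sum>t\<in>?U. c (inverse t) * d t) = 0"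
    by (simp add: algebra_simps)
  ultimately show ?thesis using False by simp
qed

definition mk2 :: "'k::field \<Rightarrow> 'k \<Rightarrow> 'k \<Rightarrow> 'k \<Rightarrow> 'k^2^2" where
  "mk2 a b c d = (\<chi> i j. if i = 1 then (if j = 1 then a else b) else (if j = 1 then c else d))"

lemma two_ne: "(1::2) \<noteq> 2" "(2::2) \<noteq> 1" by simp_all

lemma mk2_nth[simp]: "mk2 a b c d $ 1 $ 1 = a" "mk2 a b c d $ 1 $ 2 = b"
  "mk2 a b c d $ 2 $ 1 = c" "mk2 a b c d $ 2 $ 2 = d"
  by (simp_all add: mk2_def)

lemma mk2_eta: "A = mk2 (A$1$1) (A$1$2) (A$2$1) (A$2$2)"
  unfolding mk2_def vec_eq_iff forall_2 by simp

lemma mk2_mult: "mk2 a b c d ** mk2 e f g h = mk2 (a*e+b*g) (a*f+b*h) (c*e+d*g) (c*f+d*h)"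
  unfolding vec_eq_iff forall_2 matrix_matrix_mult_def by (simp add: sum_2)

lemma mk2_det: "det (mk2 a b c d) = a * d - b * c"
  by (simp add: det_2)

lemma mk2_eq: "mk2 a b c d = mk2 a' b' c' d' \<longleftrightarrow> a = a' \<and> b = b' \<and> c = c' \<and> d = d'"
  by (metis mk2_nth)

definition dg :: "'k::field \<Rightarrow> 'k^2^2" where "dg t = mk2 t 0 0 1"

lemma GL2_iff: "A \<in> GL2 \<longleftrightarrow> det A \<noteq> 0" by (simp add: GL2_def)

lemma GL2_mult: "A \<in> GL2 \<Longrightarrow> B \<in> GL2 \<Longrightarrow> A ** B \<in> GL2"
  by (simp add: GL2_def det_mul)

lemma GL2_mult_iff_r: "x \<in> GL2 \<Longrightarrow> (g ** x \<in> GL2) \<longleftrightarrow> g \<in> GL2"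
  by (simp add: GL2_def det_mul)

lemma GL2_mult_iff_l: "x \<in> GL2 \<Longrightarrow> (x ** g \<in> GL2) \<longleftrightarrow> g \<in> GL2"
  by (simp add: GL2_def det_mul)

lemma dg_GL2: "t \<noteq> 0 \<Longrightarrow> dg t \<in> GL2"
  by (simp add: GL2_def dg_def mk2_det)

lemma dg_Borel: "t \<noteq> 0 \<Longrightarrow> dg t \<in> Borel"
  by (simp add: Borel_def dg_GL2) (simp add: dg_def)

lemma dg_one: "dg 1 = mat 1"
  unfolding dg_def mk2_def vec_eq_iff forall_2 by (simp add: mat_def)

lemma Mir_Borel: "Mirabolic \<subseteq> Borel"
  by (auto simp: Mirabolic_def Borel_def)

lemma Borel_GL2: "Borel \<subseteq> GL2"
  by (auto simp: Borel_def)

lemma Borel_diag: "b \<in> Borel \<Longrightarrow> b$1$1 \<noteq> 0 \<and> b$2$2 \<noteq> 0"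
  by (auto simp: Borel_def GL2_def det_2)

lemma Borel_factor:
  assumes b: "b \<in> Borel" and t: "t \<noteq> 0"
  shows "\<exists>p\<in>Mirabolic. dg t ** b = p ** dg (t * b$1$1)"
proof
  let ?p = "mk2 1 (t * b$1$2) 0 (b$2$2)"
  have b21: "b$2$1 = 0" using b by (simp add: Borel_def)
  show "?p \<in> Mirabolic" using Borel_diag[OF b] by (simp add: Mirabolic_def GL2_def mk2_det)
  have "dg t ** b = dg t ** mk2 (b$1$1) (b$1$2) (b$2$1) (b$2$2)" by (simp flip: mk2_eta)
  also have "\<dots> = ?p ** dg (t * b$1$1)" by (simp add: dg_def mk2_mult b21)
  finally show "dg t ** b = ?p ** dg (t * b$1$1)" .
qed

lemma finite_GL2: "finite (GL2 :: ('k::{field,finite}^2^2) set)" by simp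

lemma one_GL2: "mat 1 \<in> GL2" by (simp add: GL2_def)

lemma sum_GL2_right:
  assumes x: "(x::'k::{field,finite}^2^2) \<in> GL2"
  shows "(\<Sum>g\<in>GL2. F (g ** x)) = (\<Sum>g\<in>GL2. F g)"
proof -
  obtain y where inv: "x ** y = mat 1" "y ** x = mat 1"
    using x by (auto simp: GL2_def invertible_det_nz[symmetric] invertible_def)
  have xi: "y \<in> GL2"
  proof -
    have "det x * det y = 1" using inv(1) by (metis det_I det_mul)
    then show ?thesis by (auto simp: GL2_def)
  qed
  show ?thesis
    by (rule sum.reindex_bij_witness[of _ "\<lambda>g. g ** y" "\<lambda>g. g ** x"])
       (auto simp: matrix_mul_assoc[symmetric] inv GL2_mult x xi)
qed

lemma sum_GL2_left:
  assumes x: "(x::'k::{field,finite}^2^2) \<in> GL2"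
  shows "(\<Sum>g\<in>GL2. F (x ** g)) = (\<Sum>g\<in>GL2. F g)"
proof -
  obtain y where inv: "x ** y = mat 1" "y ** x = mat 1"
    using x by (auto simp: GL2_def invertible_det_nz[symmetric] invertible_def)
  have xi: "y \<in> GL2"
  proof -
    have "det x * det y = 1" using inv(1) by (metis det_I det_mul)
    then show ?thesis by (auto simp: GL2_def)
  qed
  show ?thesis
    by (rule sum.reindex_bij_witness[of _ "\<lambda>g. y ** g" "\<lambda>g. x ** g"])
       (auto simp: matrix_mul_assoc inv GL2_mult x xi)
qed

definition Pc :: "('k::{field,finite} \<Rightarrow> complex) \<Rightarrow> ('k^2^2 \<Rightarrow> complex) \<Rightarrow> 'k^2^2 \<Rightarrow> complex" where
  "Pc ch f g = (\<Sum>t\<in>{t::'k. t \<noteq> 0}. ch (inverse t) * f (dg t ** g)) / of_nat (card {t::'k. t \<noteq> 0})"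

definition Av :: "('k::{field,finite}^2^2 \<Rightarrow> complex) \<Rightarrow> complex" where
  "Av f = (\<Sum>g\<in>GL2. f g) / of_nat (card (GL2 :: ('k^2^2) set))"

definition ind :: "'k::{field,finite}^2^2 \<Rightarrow> complex" where
  "ind g = (if g \<in> GL2 then 1 else 0)"

lemma cardU_pos: "card {t::'k::{field,finite}. t \<noteq> 0} > 0"
proof -
  have "(1::'k) \<in> {t. t \<noteq> 0}" by simp
  then show ?thesis by (metis card_gt_0_iff empty_iff finite)
qed

lemma cardGL_pos: "card (GL2 :: ('k::{field,finite}^2^2) set) > 0"
  using one_GL2 by (metis card_gt_0_iff empty_iff finite)

lemma V_iff: "f \<in> fst (ind_rep GL2 (**) Mirabolic (\<lambda>_. 1)) \<longleftrightarrow>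
   (\<forall>g. g \<notin> GL2 \<longrightarrow> f g = 0) \<and> (\<forall>h\<in>Mirabolic. \<forall>g\<in>GL2. f (h ** g) = f g)"
  by (simp add: ind_rep_def)

lemma W_iff: "f \<in> fst (rho_pair ch triv_char) \<longleftrightarrow>
   (\<forall>g. g \<notin> GL2 \<longrightarrow> f g = 0) \<and> (\<forall>h\<in>Borel. \<forall>g\<in>GL2. f (h ** g) = mu12 ch triv_char h * f g)"
  by (simp add: rho_pair_def ind_rep_def)

lemma W_shift:
  assumes k: "k \<in> fst (rho_pair \<psi> triv_char)" and t: "(t::'k::{field,finite}) \<noteq> 0"
  shows "k (dg t ** g) = \<psi> t * k g"
proof (cases "g \<in> GL2")
  case True
  have "mu12 \<psi> triv_char (dg t) = \<psi> t" by (simp add: mu12_def dg_def triv_char_def)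
  then show ?thesis using k True dg_Borel[OF t] unfolding W_iff by metis
next
  case False
  then have "dg t ** g \<notin> GL2" using GL2_mult_iff_l[OF dg_GL2[OF t]] by simp
  then show ?thesis using k False unfolding W_iff by simp
qed

lemma W_mir:
  assumes k: "k \<in> fst (rho_pair \<psi> triv_char)" and psi: "\<psi> \<in> fq_chars"
    and p: "p \<in> Mirabolic" and g: "g \<in> GL2"
  shows "k (p ** g) = k g"
proof -
  have pB: "p \<in> Borel" using p Mir_Borel by blast
  have "mu12 \<psi> triv_char p = 1"
    using p Borel_diag[OF pB] char_one[OF psi] by (simp add: mu12_def triv_char_def Mirabolic_def)
  then show ?thesis using k pB g unfolding W_iff by (metis mult_1)
qed

lemma ind_W: "ind \<in> fst (rho_pair triv_char triv_char)"
  unfolding W_iff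
proof (intro conjI allI impI ballI)
  fix g :: "'a^2^2" assume "g \<notin> GL2" then show "ind g = 0" by (simp add: ind_def)
next
  fix h g :: "'a^2^2" assume h: "h \<in> Borel" and g: "g \<in> GL2"
  then have "h ** g \<in> GL2" using Borel_GL2 GL2_mult by blast
  then show "ind (h ** g) = mu12 triv_char triv_char h * ind g"
    using g Borel_diag[OF h] by (simp add: ind_def mu12_def triv_char_def)
qed

lemma Pc_right: "Pc ch (\<lambda>g. f (g ** x)) g = Pc ch f (g ** x)"
  by (simp add: Pc_def matrix_mul_assoc)

lemma Pc_W:
  assumes f: "f \<in> fst (ind_rep GL2 (**) Mirabolic (\<lambda>_. 1))" and chi: "ch \<in> fq_chars"
  shows "Pc ch f \<in> fst (rho_pair ch triv_char)"
  unfolding W_iff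
proof (intro conjI allI impI ballI)
  fix g :: "'a^2^2" assume g: "g \<notin> GL2"
  have "f (dg t ** g) = 0" if "t \<noteq> 0" for t
    using f g GL2_mult_iff_l[OF dg_GL2[OF that]] unfolding V_iff by simp
  then show "Pc ch f g = 0" by (simp add: Pc_def)
next
  fix b g :: "'a^2^2" assume b: "b \<in> Borel" and g: "g \<in> GL2"
  let ?a = "b$1$1"
  have a0: "?a \<noteq> 0" using Borel_diag[OF b] by simp
  have step: "f (dg t ** (b ** g)) = f (dg (t * ?a) ** g)" if t: "t \<noteq> 0" for t
  proof -
    obtain p where p: "p \<in> Mirabolic" "dg t ** b = p ** dg (t * ?a)" using Borel_factor[OF b t] by blast
    have "dg t ** (b ** g) = p ** (dg (t * ?a) ** g)" using p(2) by (simp add: matrix_mul_assoc)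
    moreover have "dg (t * ?a) ** g \<in> GL2" by (intro GL2_mult dg_GL2 g) (simp add: t a0)
    ultimately show ?thesis using f p(1) unfolding V_iff by simp
  qed
  have "(\<Sum>t\<in>{t. t \<noteq> 0}. ch (inverse t) * f (dg t ** (b ** g)))
      = (\<Sum>t\<in>{t. t \<noteq> 0}. ch (inverse t) * f (dg (t * ?a) ** g))"
    by (rule sum.cong) (simp_all add: step)
  also have "\<dots> = (\<Sum>s\<in>{s. s \<noteq> 0}. ch (inverse (s / ?a)) * f (dg s ** g))"
    by (rule sum.reindex_bij_witness[of _ "\<lambda>s. s / ?a" "\<lambda>t. t * ?a"]) (use a0 in auto)
  also have "\<dots> = (\<Sum>s\<in>{s. s \<noteq> 0}. ch ?a * (ch (inverse s) * f (dg s ** g)))"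
  proof (rule sum.cong)
    fix s assume "s \<in> {s::'a. s \<noteq> 0}"
    then have s: "s \<noteq> 0" by simp
    have "inverse (s / ?a) = ?a * inverse s" using a0 s by (simp add: field_simps)
    then have "ch (inverse (s / ?a)) = ch ?a * ch (inverse s)" using char_mult[OF chi a0, of "inverse s"] s by simp
    then show "ch (inverse (s / ?a)) * f (dg s ** g) = ch ?a * (ch (inverse s) * f (dg s ** g))" by simp
  qed simp
  finally have "Pc ch f (b ** g) = ch ?a * Pc ch f g"
    unfolding Pc_def by (simp add: sum_distrib_left)
  moreover have "mu12 ch triv_char b = ch ?a" using Borel_diag[OF b] by (simp add: mu12_def triv_char_def)
  ultimately show "Pc ch f (b ** g) = mu12 ch triv_char b * Pc ch f g" by simp
qed

lemma Pc_on_W: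
  assumes k: "k \<in> fst (rho_pair \<psi> triv_char)" and psi: "\<psi> \<in> fq_chars" and chi: "ch \<in> fq_chars"
  shows "Pc ch k g = (if ch = \<psi> then k g else 0)"
proof -
  have "(\<Sum>t\<in>{t::'a. t \<noteq> 0}. ch (inverse t) * k (dg t ** g)) = (\<Sum>t\<in>{t::'a. t \<noteq> 0}. ch (inverse t) * \<psi> t) * k g"
    unfolding sum_distrib_right by (rule sum.cong) (simp_all add: W_shift[OF k])
  also have "\<dots> = (if ch = \<psi> then of_nat (card {t::'a. t \<noteq> 0}) else 0) * k g"
    by (simp add: char_orth[OF chi psi])
  finally have eq: "(\<Sum>t\<in>{t::'a. t \<noteq> 0}. ch (inverse t) * k (dg t ** g)) = (if ch = \<psi> then of_nat (card {t::'a. t \<noteq> 0}) else 0) * k g" .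
  have "of_nat (card {t::'a. t \<noteq> 0}) \<noteq> (0::complex)"
  proof -
    have "card {t::'a. t \<noteq> 0} \<noteq> 0" using cardU_pos[where 'k='a] by linarith
    then show ?thesis by (simp only: of_nat_eq_0_iff not_False_eq_True)
  qed
  then show ?thesis unfolding Pc_def eq by (cases "ch = \<psi>") simp_all
qed

lemma Pc_sum_chars:
  fixes f :: "'k::{field,finite}^2^2 \<Rightarrow> complex"
  assumes f: "f \<in> fst (ind_rep GL2 (**) Mirabolic (\<lambda>_. 1))"
  shows "(\<Sum>ch\<in>fq_chars. Pc ch f g) = of_nat (card (fq_chars :: ('k \<Rightarrow> complex) set)) / of_nat (card {t::'k. t \<noteq> 0}) * f g"
proof -
  let ?N = "of_nat (card (fq_chars :: ('k \<Rightarrow> complex) set)) :: complex"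
  have "(\<Sum>ch\<in>fq_chars. (\<Sum>t\<in>{t::'k. t \<noteq> 0}. ch (inverse t) * f (dg t ** g)))
      = (\<Sum>t\<in>{t::'k. t \<noteq> 0}. (\<Sum>ch\<in>fq_chars. ch (inverse t)) * f (dg t ** g))"
    by (subst sum.swap) (simp add: sum_distrib_right)
  also have "\<dots> = (\<Sum>t\<in>{t::'k. t \<noteq> 0}. (if t = 1 then ?N * f g else 0))"
  proof (rule sum.cong)
    fix t :: 'k assume "t \<in> {t. t \<noteq> 0}"
    then have t: "t \<noteq> 0" by simp
    show "(\<Sum>ch\<in>fq_chars. ch (inverse t)) * f (dg t ** g) = (if t = 1 then ?N * f g else 0)"
    proof (cases "t = 1")
      case True
      have "(\<Sum>ch\<in>fq_chars. ch (inverse t)) = (\<Sum>ch\<in>(fq_chars :: ('k \<Rightarrow> complex) set). 1)"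
        using True by (intro sum.cong) (simp_all add: char_one)
      then show ?thesis using True by (simp add: dg_one)
    next
      case False
      have "inverse t \<noteq> 0" "inverse t \<noteq> 1" using t False by (simp_all add: inverse_eq_1_iff)
      then have "(\<Sum>c\<in>fq_chars. c (inverse t)) = 0" by (rule char_sum_zero)
      then show ?thesis using False by simp
    qed
  qed simp
  also have "\<dots> = ?N * f g" by simp
  finally show ?thesis unfolding Pc_def by (simp add: sum_divide_distrib[symmetric])
qed

lemma Av_W0:
  fixes k :: "'k::{field,finite}^2^2 \<Rightarrow> complex"
  assumes k: "k \<in> fst (rho_pair \<psi> triv_char)" and psi: "\<psi> \<in> fq_chars" and nt: "\<psi> \<noteq> triv_char"
  shows "(\<Sum>g\<in>GL2. k g) = 0"
proof -
  obtain s where s: "\<psi> s \<noteq> triv_char s" using nt by blast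
  have s0: "s \<noteq> 0" using s char_zero[OF psi] by (auto simp: triv_char_def)
  then have s1: "\<psi> s \<noteq> 1" using s by (simp add: triv_char_def)
  have "(\<Sum>g\<in>GL2. k g) = (\<Sum>g\<in>GL2. k (dg s ** g))" by (rule sum_GL2_left[symmetric]) (rule dg_GL2[OF s0])
  also have "\<dots> = \<psi> s * (\<Sum>g\<in>GL2. k g)" by (simp add: W_shift[OF k s0] sum_distrib_left)
  finally have "(\<psi> s - 1) * (\<Sum>g\<in>GL2. k g) = 0" by (simp add: algebra_simps)
  then show ?thesis using s1 by simp
qed

lemma sum_Pc_triv:
  fixes f :: "'k::{field,finite}^2^2 \<Rightarrow> complex"
  shows "(\<Sum>g\<in>GL2. Pc triv_char f g) = (\<Sum>g\<in>GL2. f g)"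
proof -
  let ?U = "{t::'k. t \<noteq> 0}"
  have "(\<Sum>g\<in>GL2. (\<Sum>t\<in>?U. triv_char (inverse t) * f (dg t ** g)))
      = (\<Sum>t\<in>?U. (\<Sum>g\<in>GL2. f (dg t ** g)))"
    by (subst sum.swap) (rule sum.cong, simp, rule sum.cong, simp_all add: triv_char_def)
  also have "\<dots> = (\<Sum>t\<in>?U. (\<Sum>g\<in>GL2. f g))"
    by (rule sum.cong) (simp_all add: sum_GL2_left dg_GL2)
  also have "\<dots> = of_nat (card ?U) * (\<Sum>g\<in>GL2. f g)" by simp
  finally have eq: "(\<Sum>g\<in>GL2. (\<Sum>t\<in>?U. triv_char (inverse t) * f (dg t ** g))) = of_nat (card ?U) * (\<Sum>g\<in>GL2. f g)" .
  have nz: "of_nat (card ?U) \<noteq> (0::complex)"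
  proof -
    have "card ?U \<noteq> 0" using cardU_pos[where 'k='k] by linarith
    then show ?thesis by (simp only: of_nat_eq_0_iff not_False_eq_True)
  qed
  show ?thesis unfolding Pc_def sum_divide_distrib[symmetric] eq using nz by simp
qed

lemma Pc_lin: "Pc ch (\<lambda>x. a * u x + b * v x) g = a * Pc ch u g + b * Pc ch v g"
  by (simp add: Pc_def sum.distrib sum_distrib_left algebra_simps add_divide_distrib)

lemma Av_lin: "Av (\<lambda>x. a * u x + b * v x) = a * Av u + b * Av v"
  by (simp add: Av_def sum.distrib sum_distrib_left algebra_simps add_divide_distrib)

lemma Pc_comb:
  fixes h :: "'k::{field,finite}^2^2 \<Rightarrow> complex" and k :: "'i \<Rightarrow> 'k^2^2 \<Rightarrow> complex"
  shows "Pc ch (\<lambda>g. a * ind g + h g + (\<Sum>c\<in>I. k c g)) g = a * Pc ch ind g + Pc ch h g + (\<Sum>c\<in>I. Pc ch (k c) g)"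
proof -
  let ?U = "{t. t \<noteq> 0}"
  have "(\<Sum>t\<in>?U. ch (inverse t) * (a * ind (dg t ** g) + h (dg t ** g) + (\<Sum>c\<in>I. k c (dg t ** g))))
     = a * (\<Sum>t\<in>?U. ch (inverse t) * ind (dg t ** g)) + (\<Sum>t\<in>?U. ch (inverse t) * h (dg t ** g))
       + (\<Sum>c\<in>I. (\<Sum>t\<in>?U. ch (inverse t) * k c (dg t ** g)))"
    by (simp add: sum.distrib distrib_left sum_distrib_left algebra_simps sum.swap[of _ I])
  note eq = this
  show ?thesis unfolding Pc_def
    by (subst eq) (simp add: add_divide_distrib sum_divide_distrib[symmetric])
qed

lemma Av_comb:
  fixes h :: "'k::{field,finite}^2^2 \<Rightarrow> complex" and k :: "'i \<Rightarrow> 'k^2^2 \<Rightarrow> complex"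
  shows "(\<Sum>g\<in>GL2. a * ind g + h g + (\<Sum>c\<in>I. k c g)) = a * (\<Sum>g\<in>(GL2::('k^2^2) set). ind g) + (\<Sum>g\<in>GL2. h g) + (\<Sum>c\<in>I. (\<Sum>g\<in>GL2. k c g))"
  by (simp add: sum.distrib sum_distrib_left sum.swap[of _ I])

lemma S_iff:
  "y \<in> fst (dsum2 triv_rep (dsum2 (rho_single triv_char) (dsum_fam I (\<lambda>c. rho_pair c triv_char)))) \<longleftrightarrow>
    ((\<lambda>g. y (Inr (Inl g))) \<in> fst (rho_pair triv_char triv_char) \<and> (\<Sum>g\<in>GL2. y (Inr (Inl g))) = 0) \<and>
    (\<forall>c\<in>I. (\<lambda>g. y (Inr (Inr (c, g)))) \<in> fst (rho_pair c triv_char)) \<and>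
    (\<forall>c g. c \<notin> I \<longrightarrow> y (Inr (Inr (c, g))) = 0)"
  for y :: "unit + ('k::{field,finite}^2^2 + ('k \<Rightarrow> complex) \<times> ('k^2^2)) \<Rightarrow> complex"
proof -
  have "(\<Sum>g\<in>GL2. y (Inr (Inl g)) * cnj (triv_char (det g))) = (\<Sum>g\<in>GL2. y (Inr (Inl g)))"
    by (rule sum.cong) (simp_all add: triv_char_def GL2_def)
  then show ?thesis
    by (simp add: dsum2_def dsum_fam_def triv_rep_def rho_single_def)
qed

lemma S_act:
  fixes y :: "unit + ('k::{field,finite}^2^2 + ('k \<Rightarrow> complex) \<times> ('k^2^2)) \<Rightarrow> complex"
  shows
  "snd (dsum2 triv_rep (dsum2 (rho_single triv_char) (dsum_fam I (\<lambda>c. rho_pair c triv_char)))) x y =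
    (\<lambda>z. case z of Inl u \<Rightarrow> y (Inl u) | Inr (Inl g) \<Rightarrow> y (Inr (Inl (g ** x)))
       | Inr (Inr (c, g)) \<Rightarrow> (if c \<in> I then y (Inr (Inr (c, g ** x))) else 0))"
  by (rule ext, simp add: dsum2_def dsum_fam_def triv_rep_def rho_single_def rho_pair_def ind_rep_def
      split: sum.split prod.split)

theorem proposition5p1:
  assumes "CARD('k::{field,finite}) > 2"
  shows "rep_iso (GL2 :: ('k ^ 2 ^ 2) set)
           (ind_rep GL2 (**) Mirabolic (\<lambda>_. 1))
           (dsum2 triv_rep
              (dsum2 (rho_single (triv_char :: 'k \<Rightarrow> complex))
                     (dsum_fam (fq_chars - {triv_char}) (\<lambda>c. rho_pair c triv_char))))"
proof -
  define I :: "('k \<Rightarrow> complex) set" where "I = fq_chars - {triv_char}"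
  define T :: "('k^2^2 \<Rightarrow> complex) \<Rightarrow> unit + ('k^2^2 + ('k \<Rightarrow> complex) \<times> ('k^2^2)) \<Rightarrow> complex"
    where "T f = (\<lambda>z. case z of Inl u \<Rightarrow> Av f | Inr (Inl g) \<Rightarrow> Pc triv_char f g - Av f * ind g
       | Inr (Inr (c, g)) \<Rightarrow> (if c \<in> I then Pc c f g else 0))" for f
  let ?V = "fst (ind_rep GL2 (**) Mirabolic (\<lambda>_. 1)) :: ('k^2^2 \<Rightarrow> complex) set"
  let ?S = "fst (dsum2 triv_rep (dsum2 (rho_single (triv_char :: 'k \<Rightarrow> complex)) (dsum_fam I (\<lambda>c. rho_pair c triv_char))))"
  have lin: "T (\<lambda>x. a * u x + b * v x) = (\<lambda>y. a * T u y + b * T v y)" for u v a b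
    by (rule ext) (simp add: T_def Pc_lin Av_lin algebra_simps split: sum.split prod.split)
  have act: "T (snd (ind_rep GL2 (**) Mirabolic (\<lambda>_. 1)) x f) =
      snd (dsum2 triv_rep (dsum2 (rho_single triv_char) (dsum_fam I (\<lambda>c. rho_pair c triv_char)))) x (T f)"
    if x: "x \<in> GL2" for x f
  proof -
    have av: "Av (\<lambda>g. f (g ** x)) = Av f" unfolding Av_def using sum_GL2_right[OF x, of f] by simp
    have ind: "ind (g ** x) = ind g" for g using GL2_mult_iff_r[OF x] by (simp add: ind_def)
    show ?thesis unfolding S_act
      by (rule ext) (simp add: ind_rep_def T_def av ind Pc_right split: sum.split prod.split)
  qed
  have Cfin: "finite (fq_chars :: ('k \<Rightarrow> complex) set)" by (rule finite_chars)
  have ncard: "of_nat (card (fq_chars :: ('k \<Rightarrow> complex) set)) / of_nat (card {t::'k. t \<noteq> 0}) \<noteq> (0::complex)"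
  proof -
    have "card (fq_chars :: ('k \<Rightarrow> complex) set) \<noteq> 0" using Cfin triv_in by (metis card_0_eq empty_iff)
    moreover have "card {t::'k. t \<noteq> 0} \<noteq> 0" using cardU_pos[where 'k='k] by linarith
    ultimately show ?thesis by simp
  qed
  have inj: "inj_on T ?V"
  proof (rule inj_onI)
    fix f1 f2 assume f1: "f1 \<in> ?V" and f2: "f2 \<in> ?V" and eq: "T f1 = T f2"
    have P: "Pc c f1 g = Pc c f2 g" if c: "c \<in> fq_chars" for c g
    proof (cases "c = triv_char")
      case True
      have "Pc triv_char f g = T f (Inr (Inl g)) + T f (Inl ()) * ind g" for f
        by (simp add: T_def)
      then show ?thesis using eq True by simp
    next
      case False
      then have "c \<in> I" using c by (simp add: I_def)
      then have "Pc c f g = T f (Inr (Inr (c, g)))" for f by (simp add: T_def)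
      then show ?thesis using eq by simp
    qed
    show "f1 = f2"
    proof
      fix g
      have "(\<Sum>c\<in>fq_chars. Pc c f1 g) = (\<Sum>c\<in>fq_chars. Pc c f2 g)" using P by simp
      then have "(of_nat (card (fq_chars :: ('k \<Rightarrow> complex) set)) / of_nat (card {t::'k. t \<noteq> 0})) * f1 g
           = (of_nat (card (fq_chars :: ('k \<Rightarrow> complex) set)) / of_nat (card {t::'k. t \<noteq> 0})) * f2 g"
        using Pc_sum_chars[OF f1, of g] Pc_sum_chars[OF f2, of g] by metis
      then show "f1 g = f2 g" by (rule mult_left_cancel[THEN iffD1, OF ncard])
    qed
  qed
  have into: "T f \<in> ?S" if f: "f \<in> ?V" for f
    unfolding S_iff
  proof (intro conjI ballI allI impI)
    have PW: "Pc triv_char f \<in> fst (rho_pair triv_char triv_char)" by (rule Pc_W[OF f triv_in])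
    show "(\<lambda>g. T f (Inr (Inl g))) \<in> fst (rho_pair triv_char triv_char)"
      unfolding W_iff
    proof (intro conjI allI impI ballI)
      fix g :: "'k^2^2" assume "g \<notin> GL2"
      then show "T f (Inr (Inl g)) = 0" using PW unfolding W_iff by (simp add: T_def ind_def)
    next
      fix b g :: "'k^2^2" assume b: "b \<in> Borel" and g: "g \<in> GL2"
      have mu: "mu12 triv_char triv_char b = 1" using Borel_diag[OF b] by (simp add: mu12_def triv_char_def)
      have "Pc triv_char f (b ** g) = Pc triv_char f g"
        using PW b g mu unfolding W_iff by simp
      moreover have "b ** g \<in> GL2" using b g Borel_GL2 GL2_mult by blast
      then have "ind (b ** g) = ind g" using g by (simp add: ind_def)
      ultimately
      show "T f (Inr (Inl (b ** g))) = mu12 triv_char triv_char b * T f (Inr (Inl g))"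
        using mu by (simp add: T_def)
    qed
    have "(\<Sum>g\<in>GL2. T f (Inr (Inl g))) = (\<Sum>g\<in>GL2. Pc triv_char f g) - Av f * (\<Sum>g\<in>(GL2::('k^2^2) set). ind g)"
      by (simp add: T_def sum_subtractf sum_distrib_left)
    also have "\<dots> = 0"
      using cardGL_pos[where 'k='k] by (simp add: sum_Pc_triv Av_def ind_def)
    finally show "(\<Sum>g\<in>GL2. T f (Inr (Inl g))) = 0" .
  next
    fix c assume c: "c \<in> I"
    then have "c \<in> fq_chars" by (simp add: I_def)
    then show "(\<lambda>g. T f (Inr (Inr (c, g)))) \<in> fst (rho_pair c triv_char)"
      using Pc_W[OF f] c by (simp add: T_def)
  next
    fix c g assume "c \<notin> I"
    then show "T f (Inr (Inr (c, g))) = 0" by (simp add: T_def)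
  qed
  have onto: "y \<in> T ` ?V" if y: "y \<in> ?S" for y
  proof -
    define a where "a = y (Inl ())"
    define h where "h g = y (Inr (Inl g))" for g
    define k where "k c g = y (Inr (Inr (c, g)))" for c g
    have h: "h \<in> fst (rho_pair triv_char triv_char)" "(\<Sum>g\<in>GL2. h g) = 0"
      using y unfolding S_iff h_def by auto
    have k: "k c \<in> fst (rho_pair c triv_char)" if "c \<in> I" for c
      using y that unfolding S_iff k_def by auto
    have k0: "k c g = 0" if "c \<notin> I" for c g
      using y that unfolding S_iff k_def by auto
    have IC: "c \<in> fq_chars" "c \<noteq> triv_char" if "c \<in> I" for c using that by (auto simp: I_def)
    define f where "f g = a * ind g + h g + (\<Sum>c\<in>I. k c g)" for g
    have fV: "f \<in> ?V"
      unfolding V_iff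
    proof (intro conjI allI impI ballI)
      fix g :: "'k^2^2" assume g: "g \<notin> GL2"
      then show "f g = 0" using h(1) k g unfolding f_def W_iff by (simp add: ind_def)
    next
      fix p g :: "'k^2^2" assume p: "p \<in> Mirabolic" and g: "g \<in> GL2"
      have "ind (p ** g) = ind g" using W_mir[OF ind_W triv_in p g] .
      moreover have "h (p ** g) = h g" using W_mir[OF h(1) triv_in p g] .
      moreover have "k c (p ** g) = k c g" if "c \<in> I" for c using W_mir[OF k[OF that] IC(1)[OF that] p g] .
      ultimately show "f (p ** g) = f g" unfolding f_def by simp
    qed
    have Av: "Av f = a"
    proof -
        have "(\<Sum>g\<in>GL2. f g) = a * (\<Sum>g\<in>(GL2::('k^2^2) set). ind g) + (\<Sum>g\<in>GL2. h g) + (\<Sum>c\<in>I. (\<Sum>g\<in>GL2. k c g))"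
          unfolding f_def by (rule Av_comb)
        also have "\<dots> = a * of_nat (card (GL2::('k^2^2) set))"
          using h(2) Av_W0[OF k IC(1) IC(2)] by (simp add: ind_def)
        finally have eqA: "Av f = a * of_nat (card (GL2::('k^2^2) set)) / of_nat (card (GL2::('k^2^2) set))"
          unfolding Av_def by (simp only:)
        have nz: "of_nat (card (GL2::('k^2^2) set)) \<noteq> (0::complex)"
        proof -
          have "card (GL2::('k^2^2) set) \<noteq> 0" using cardGL_pos[where 'k='k] by linarith
          then show ?thesis by (simp only: of_nat_eq_0_iff not_False_eq_True)
        qed
        show "Av f = a" using eqA nonzero_mult_div_cancel_right[OF nz, of a] by (rule trans)
    qed
    have "T f = y"
    proof
      fix z show "T f z = y z"
      proof (cases z)
        case (Inl u)
        then show ?thesis using Av by (simp add: T_def a_def)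
      next
        case (Inr z')
        show ?thesis
        proof (cases z')
          case (Inl g)
          have "Pc triv_char f g = a * Pc triv_char ind g + Pc triv_char h g + (\<Sum>c\<in>I. Pc triv_char (k c) g)"
            unfolding f_def by (rule Pc_comb)
          also have "\<dots> = a * ind g + h g"
          proof -
            have p1: "Pc triv_char ind g = ind g" using Pc_on_W[OF ind_W triv_in triv_in, of g] by simp
            have p2: "Pc triv_char h g = h g" using Pc_on_W[OF h(1) triv_in triv_in, of g] by simp
            have p3: "(\<Sum>c\<in>I. Pc triv_char (k c) g) = 0"
              by (rule sum.neutral) (use Pc_on_W[OF k IC(1) triv_in] IC(2) in auto)
            show ?thesis by (simp only: p1 p2 p3 add_0_right)
          qed
          finally show ?thesis using Inr Inl Av by (simp add: T_def h_def)
        next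
          case (Inr cg)
          obtain c g where cg: "cg = (c, g)" by fastforce
          show ?thesis
          proof (cases "c \<in> I")
            case True
            have "Pc c f g = a * Pc c ind g + Pc c h g + (\<Sum>c'\<in>I. Pc c (k c') g)"
              unfolding f_def by (rule Pc_comb)
            also have "\<dots> = (\<Sum>c'\<in>I. if c = c' then k c' g else 0)"
              using Pc_on_W[OF ind_W triv_in IC(1)[OF True]] Pc_on_W[OF h(1) triv_in IC(1)[OF True]]
                Pc_on_W[OF k IC(1) IC(1)[OF True]] IC(2)[OF True] by simp
            also have "\<dots> = k c g"
            proof -
              have "finite I" using Cfin by (simp add: I_def)
              then show ?thesis using True by (simp add: sum.delta)
            qed
            finally show ?thesis using \<open>z = Inr z'\<close> Inr cg True by (simp add: T_def k_def)
          next
            case False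
            then show ?thesis using \<open>z = Inr z'\<close> Inr cg k0 by (simp add: T_def k_def)
          qed
        qed
      qed
    qed
    then show ?thesis using fV by blast
  qed
  show ?thesis
    unfolding rep_iso_def I_def[symmetric]
  proof (intro exI[of _ T] conjI ballI allI)
    show "T (\<lambda>x. a * u x + b * v x) = (\<lambda>y. a * T u y + b * T v y)" for u v a b by (rule lin)
    show "bij_betw T ?V ?S" unfolding bij_betw_def using inj into onto by blast
    show "T (snd (ind_rep GL2 (**) Mirabolic (\<lambda>_. 1)) x f) =
      snd (dsum2 triv_rep (dsum2 (rho_single triv_char) (dsum_fam I (\<lambda>c. rho_pair c triv_char)))) x (T f)"
      if "x \<in> GL2" for x f using act[OF that] .
  qed
qed

end
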